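(* Let $H$ be a (simple) graph containing no cycle of length 5, and let $C$ be a shortest odd cycle of length at least $7$ in $H$ (i.e. an odd cycle of minimum length among odd cycles of length $\geq 7$). Then $C$ contains an edge $v_1v_2$ and a vertex $w$ opposite to it on $C$ such that $C$ is the union of the edge $v_1v_2$, a shortest $v_1$–$w$ path in $H$, and a shortest $v_2$–$w$ path in $H$.
   Context: Cycles are subgraphs, not necessarily induced. The length of a path or cycle is its number of edges. For a cycle of length $2k+1$, the vertex $w$ opposite the edge $v_1v_2$ is the vertex at distance $k$ along the cycle from both $v_1$ and $v_2$. *)

theory Defs
  imports Main
begin

definition simple_graph :: "'a set \<Rightarrow> ('a \<Rightarrow> 'a \<Rightarrow> bool) \<Rightarrow> bool" where
  "simple_graph V E \<longleftrightarrow> (\<forall>x y. E x y \<longrightarrow> x \<in> V \<and> y \<in> V) \<and>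
     (\<forall>x y. E x y \<longrightarrow> E y x) \<and> (\<forall>x. \<not> E x x)"

text \<open>A path, given by its (distinct) vertex sequence; its length is (length P - 1) edges.\<close>
definition is_path :: "('a \<Rightarrow> 'a \<Rightarrow> bool) \<Rightarrow> 'a list \<Rightarrow> bool" where
  "is_path E P \<longleftrightarrow> P \<noteq> [] \<and> distinct P \<and> (\<forall>i. Suc i < length P \<longrightarrow> E (P ! i) (P ! Suc i))"

text \<open>A cycle, given by its cyclic sequence of distinct vertices; its length is length C.\<close>
definition is_cycle :: "('a \<Rightarrow> 'a \<Rightarrow> bool) \<Rightarrow> 'a list \<Rightarrow> bool" where
  "is_cycle E C \<longleftrightarrow> 3 \<le> length C \<and> distinct C \<and>
     (\<forall>i < length C. E (C ! i) (C ! ((i + 1) mod length C)))"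

definition path_edges :: "'a list \<Rightarrow> 'a set set" where
  "path_edges P = {{P ! i, P ! Suc i} | i. Suc i < length P}"

definition cycle_edges :: "'a list \<Rightarrow> 'a set set" where
  "cycle_edges C = {{C ! i, C ! ((i + 1) mod length C)} | i. i < length C}"

definition shortest_path :: "('a \<Rightarrow> 'a \<Rightarrow> bool) \<Rightarrow> 'a list \<Rightarrow> 'a \<Rightarrow> 'a \<Rightarrow> bool" where
  "shortest_path E P u v \<longleftrightarrow> is_path E P \<and> hd P = u \<and> last P = v \<and>
     (\<forall>Q. is_path E Q \<and> hd Q = u \<and> last Q = v \<longrightarrow> length P \<le> length Q)"

end

theory Submission
  imports Defs
begin



lemma last_notin_butlast: "distinct xs \<Longrightarrow> xs \<noteq> [] \<Longrightarrow> last xs \<notin> set (butlast xs)"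
  by (metis append_butlast_last_id distinct_append disjoint_iff list.set_intros(1))

lemma is_path_rev:
  assumes sym: "\<And>x y. E x y \<Longrightarrow> E y x" and p: "is_path E P"
  shows "is_path E (rev P)"
  unfolding is_path_def
proof (intro conjI allI impI)
  show "rev P \<noteq> []" "distinct (rev P)" using p by (auto simp: is_path_def)
  fix i assume i: "Suc i < length (rev P)"
  have "E (P ! (length P - Suc (Suc i))) (P ! Suc (length P - Suc (Suc i)))"
    using p i by (auto simp: is_path_def)
  moreover have "Suc (length P - Suc (Suc i)) = length P - Suc i" using i by simp
  ultimately show "E (rev P ! i) (rev P ! Suc i)" using i sym by (auto simp: rev_nth)
qed

lemma is_path_append:
  assumes "is_path E xs" "is_path E ys" "E (last xs) (hd ys)" "set xs \<inter> set ys = {}"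
  shows "is_path E (xs @ ys)"
  unfolding is_path_def
proof (intro conjI allI impI)
  show "xs @ ys \<noteq> []" "distinct (xs @ ys)" using assms by (auto simp: is_path_def)
  fix i assume i: "Suc i < length (xs @ ys)"
  consider "Suc i < length xs" | "Suc i = length xs" | "Suc i > length xs" by linarith
  then show "E ((xs @ ys) ! i) ((xs @ ys) ! Suc i)"
  proof cases
    case 1 then show ?thesis using assms by (auto simp: is_path_def nth_append)
  next
    case 2
    then have "i = length xs - 1" by simp
    then show ?thesis using assms 2
      by (auto simp: is_path_def nth_append last_conv_nth hd_conv_nth)
  next
    case 3
    then have "Suc (i - length xs) < length ys" using i by simp
    then have "E (ys ! (i - length xs)) (ys ! Suc (i - length xs))" using assms by (auto simp: is_path_def)
    moreover have "Suc i - length xs = Suc (i - length xs)" using 3 by simp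
    ultimately show ?thesis using 3 by (auto simp: nth_append)
  qed
qed

lemma is_path_take:
  assumes "is_path E P" "0 < k" shows "is_path E (take k P)"
  using assms unfolding is_path_def by auto

lemma is_path_drop:
  assumes "is_path E P" "k < length P" shows "is_path E (drop k P)"
  using assms unfolding is_path_def by auto

lemma glue:
  assumes pP: "is_path E P" and pA: "is_path E A"
    and h1: "hd P = x" "last P = y" "hd A = y" "last A = x" and xy: "x \<noteq> y"
    and int: "set P \<inter> set A = {x, y}" and len: "5 \<le> length P + length A"
  shows "is_cycle E (butlast P @ butlast A) \<and> length (butlast P @ butlast A) = length P + length A - 2"
proof -
  have nP: "P \<noteq> []" and nA: "A \<noteq> []" using pP pA by (auto simp: is_path_def)
  have lP: "2 \<le> length P"
  proof (rule ccontr)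
    assume "\<not> 2 \<le> length P" moreover have "length P \<noteq> 0" using nP by simp
    ultimately have "length P = 1" by linarith
    then have "hd P = last P" using nP by (cases P) auto
    then show False using h1 xy by simp
  qed
  have lA: "2 \<le> length A"
  proof (rule ccontr)
    assume "\<not> 2 \<le> length A" moreover have "length A \<noteq> 0" using nA by simp
    ultimately have "length A = 1" by linarith
    then have "hd A = last A" using nA by (cases A) auto
    then show False using h1 xy by simp
  qed
  define D where "D = butlast P @ butlast A"
  define L where "L = length P + length A - 2"
  have lD: "length D = L" unfolding D_def L_def using lP lA by simp
  have dP: "distinct P" and dA: "distinct A" using pP pA by (auto simp: is_path_def)
  have yP: "y \<notin> set (butlast P)" using last_notin_butlast[OF dP nP] h1 by simp
  have xA: "x \<notin> set (butlast A)" using last_notin_butlast[OF dA nA] h1 by simp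
  have "set (butlast P) \<inter> set (butlast A) = {}"
  proof -
    have "set (butlast P) \<inter> set (butlast A) \<subseteq> set P \<inter> set A"
      by (auto dest: in_set_butlastD)
    then have "set (butlast P) \<inter> set (butlast A) \<subseteq> {x, y}" using int by simp
    then show ?thesis using yP xA by blast
  qed
  then have dD: "distinct D" unfolding D_def using dP dA by (simp add: distinct_butlast)
  have P0: "P ! 0 = x" using h1 nP by (simp add: hd_conv_nth)
  have Pl: "P ! (length P - 1) = y" using h1 nP by (simp add: last_conv_nth)
  have A0: "A ! 0 = y" using h1 nA by (simp add: hd_conv_nth)
  have Al: "A ! (length A - 1) = x" using h1 nA by (simp add: last_conv_nth)
  have EP: "\<And>i. Suc i < length P \<Longrightarrow> E (P ! i) (P ! Suc i)" using pP by (auto simp: is_path_def)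
  have EA: "\<And>i. Suc i < length A \<Longrightarrow> E (A ! i) (A ! Suc i)" using pA by (auto simp: is_path_def)
  have DP: "\<And>i. i < length P - 1 \<Longrightarrow> D ! i = P ! i" unfolding D_def
    by (simp add: nth_append nth_butlast)
  have DA: "\<And>i. length P - 1 \<le> i \<Longrightarrow> i < L \<Longrightarrow> D ! i = A ! (i - (length P - 1))" unfolding D_def L_def
    using lP lA by (simp add: nth_append nth_butlast)
  have adj: "E (D ! i) (D ! ((i + 1) mod L))" if i: "i < L" for i
  proof -
    consider "i + 2 < length P" | "i + 2 = length P" | "length P < i + 2 \<and> i + 1 < L" | "i + 1 = L"
      using i by linarith
    then show ?thesis
    proof cases
      case 1
      then have "(i + 1) mod L = Suc i" using i L_def lA by simp
      then show ?thesis using 1 DP EP by simp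
    next
      case 2
      then have "(i + 1) mod L = length P - 1" using i L_def lA by simp
      moreover have "D ! (length P - 1) = y" using DA[of "length P - 1"] A0 L_def lA lP by simp
      moreover have si: "Suc i = length P - 1" using 2 by simp
      moreover have "D ! i = P ! i" using DP 2 by simp
      moreover have "E (P ! i) (P ! Suc i)" using EP 2 by simp
      ultimately show ?thesis using Pl by simp
    next
      case 3
      then have m: "(i + 1) mod L = Suc i" by simp
      have le: "length P - 1 \<le> i" using 3 by linarith
      have "D ! i = A ! (i - (length P - 1))" using DA[OF le i] .
      moreover have "D ! Suc i = A ! (Suc i - (length P - 1))" using DA[of "Suc i"] 3 le by simp
      moreover have "Suc i - (length P - 1) = Suc (i - (length P - 1))" using le by simp
      moreover have "Suc (i - (length P - 1)) < length A" using 3 L_def lP lA by linarith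
      ultimately show ?thesis using m EA by metis
    next
      case 4
      then have "(i + 1) mod L = 0" by simp
      moreover have "D ! 0 = x" using DP[of 0] lP P0 by simp
      moreover have "D ! i = A ! (length A - 2)" using DA[of i] 4 L_def lP lA by simp
      moreover have "E (A ! (length A - 2)) (A ! Suc (length A - 2))" using EA lA by simp
      moreover have "Suc (length A - 2) = length A - 1" using lA by simp
      ultimately show ?thesis using Al by simp
    qed
  qed
  have "is_cycle E D" unfolding is_cycle_def using adj dD lD L_def len by simp
  then show ?thesis using lD L_def D_def by simp
qed




locale L =
  fixes E :: "'a \<Rightarrow> 'a \<Rightarrow> bool" and C :: "'a list"
  assumes sym: "\<And>x y. E x y \<Longrightarrow> E y x"
  and noC5: "\<not> (\<exists>D. is_cycle E D \<and> length D = 5)"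
  and cyc: "is_cycle E C"
  and oddC: "odd (length C)"
  and ge7: "7 \<le> length C"
  and shortest: "\<forall>D. is_cycle E D \<and> odd (length D) \<and> 7 \<le> length D \<longrightarrow> length C \<le> length D"
begin

abbreviation n where "n \<equiv> length C"
definition cv where "cv u = C ! (u mod n)"
definition arc where "arc b d = map (\<lambda>t. cv (b+t)) [0..<Suc d]"

lemma odd_short: assumes "is_cycle E D" "odd (length D)" "length D < n" shows "length D = 3"
proof -
  have "3 \<le> length D" using assms by (simp add: is_cycle_def)
  moreover have "length D \<noteq> 5" using noC5 assms by blast
  moreover have "\<not> 7 \<le> length D" using shortest assms by force
  ultimately show ?thesis using assms(2) by presburger
qed

lemma dC: "distinct C" using cyc by (simp add: is_cycle_def)
lemma npos: "0 < n" using ge7 by linarith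

lemma cv_eq: "cv u = cv v \<longleftrightarrow> u mod n = v mod n"
  using dC npos by (simp add: cv_def nth_eq_iff_index_eq)

lemma cv_in: "cv u \<in> set C" using npos by (simp add: cv_def)

lemma cv_adj: "E (cv u) (cv (Suc u))"
proof -
  have "E (C ! (u mod n)) (C ! ((u mod n + 1) mod n))" using cyc npos by (simp add: is_cycle_def)
  then show ?thesis by (simp add: cv_def mod_Suc_eq)
qed

lemma cv_period: "cv (u + n) = cv u" by (simp add: cv_def)

lemma cv_win: assumes "cv (a+t1) = cv (a+t2)" "t1 \<le> n" "t2 \<le> n"
  shows "t1 = t2 \<or> (t1 = 0 \<and> t2 = n) \<or> (t1 = n \<and> t2 = 0)"
proof -
  have m: "(a+t1) mod n = (a+t2) mod n" using assms cv_eq by simp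
  have aux: "t = s \<or> (t = 0 \<and> s = n)" if "(a+t) mod n = (a+s) mod n" "t \<le> s" "s \<le> n" for t s
  proof -
    have "n dvd (a+s) - (a+t)" using that mod_eq_dvd_iff_nat[of "a+t" "a+s" n] by simp
    then have d: "n dvd s - t" by simp
    show ?thesis
    proof (cases "s - t = 0")
      case True then show ?thesis using that by simp
    next
      case False then have "n \<le> s - t" using d by (simp add: dvd_imp_le)
      then show ?thesis using that by arith
    qed
  qed
  show ?thesis
  proof (cases "t1 \<le> t2")
    case True then show ?thesis using aux[OF m] assms by blast
  next
    case False then show ?thesis using aux[OF m[symmetric]] assms by fastforce
  qed
qed

lemma mod_hit: assumes "j < n" shows "\<exists>t<n. (r + t) mod n = j"
proof -
  define t where "t = (j + n - r mod n) mod n"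
  have "(r + t) mod n = (r mod n + (j + n - r mod n)) mod n" unfolding t_def
    by (metis mod_add_eq mod_mod_trivial)
  also have "\<dots> = (j + n) mod n"
  proof -
    have "r mod n < n" using npos by simp
    then have "r mod n + (j + n - r mod n) = j + n" by arith
    then show ?thesis by simp
  qed
  also have "\<dots> = j" using assms by simp
  finally have "(r + t) mod n = j" .
  moreover have "t < n" using npos t_def by simp
  ultimately show ?thesis by blast
qed

lemma set_C: "set C = {cv (r+t) | t. t < n}"
proof
  show "{cv (r+t) | t. t < n} \<subseteq> set C" using cv_in by auto
  show "set C \<subseteq> {cv (r+t) | t. t < n}"
  proof
    fix x assume "x \<in> set C"
    then obtain j where j: "j < n" "x = C ! j" by (auto simp: in_set_conv_nth)
    obtain t where "t < n" "(r+t) mod n = j" using mod_hit[OF j(1)] by blast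
    then show "x \<in> {cv (r+t) | t. t < n}" using j by (auto simp: cv_def)
  qed
qed

lemma cycle_edges_cv: "cycle_edges C = {{cv (r+t), cv (r+t+1)} | t. t < n}"
proof
  show "cycle_edges C \<subseteq> {{cv (r+t), cv (r+t+1)} | t. t < n}"
  proof
    fix e assume "e \<in> cycle_edges C"
    then obtain j where j: "j < n" "e = {C ! j, C ! ((j + 1) mod n)}" by (auto simp: cycle_edges_def)
    obtain t where t: "t < n" "(r+t) mod n = j" using mod_hit[OF j(1)] by blast
    have "(r + t + 1) mod n = (j + 1) mod n" using t by (metis mod_Suc_eq add.commute plus_1_eq_Suc)
    then show "e \<in> {{cv (r+t), cv (r+t+1)} | t. t < n}" using j t by (auto simp: cv_def)
  qed
  show "{{cv (r+t), cv (r+t+1)} | t. t < n} \<subseteq> cycle_edges C"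
  proof
    fix e assume "e \<in> {{cv (r+t), cv (r+t+1)} | t. t < n}"
    then obtain t where t: "e = {cv (r+t), cv (r+t+1)}" by auto
    define j where "j = (r + t) mod n"
    have "(r + t + 1) mod n = (j + 1) mod n" unfolding j_def by (metis mod_Suc_eq add.commute plus_1_eq_Suc)
    then have "e = {C ! j, C ! ((j + 1) mod n)}" using t by (simp add: cv_def j_def)
    moreover have "j < n" using npos j_def by simp
    ultimately show "e \<in> cycle_edges C" by (auto simp: cycle_edges_def)
  qed
qed

lemma arc_len[simp]: "length (arc b d) = Suc d" by (simp add: arc_def)
lemma arc_nth: "t \<le> d \<Longrightarrow> arc b d ! t = cv (b+t)" by (simp add: arc_def del: upt_Suc)
lemma arc_hd: "hd (arc b d) = cv b" by (simp add: arc_def hd_map del: upt_Suc)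
lemma arc_last: "last (arc b d) = cv (b+d)" by (simp add: arc_def last_map del: upt_Suc)
lemma arc_set: "set (arc b d) = {cv (b+t) | t. t \<le> d}"
  by (auto simp: arc_def less_Suc_eq_le simp del: upt_Suc)
lemma arc_subC: "set (arc b d) \<subseteq> set C" using cv_in by (auto simp: arc_set)

lemma arc_path: assumes "d < n" shows "is_path E (arc b d)"
  unfolding is_path_def
proof (intro conjI allI impI)
  show "arc b d \<noteq> []" by (simp add: arc_def)
  have "inj_on (\<lambda>t. cv (b+t)) {0..<Suc d}"
    by (rule inj_onI) (use cv_win assms in fastforce)
  then show "distinct (arc b d)" by (simp add: arc_def distinct_map del: upt_Suc)
  fix i assume "Suc i < length (arc b d)"
  then show "E (arc b d ! i) (arc b d ! Suc i)" using cv_adj by (simp add: arc_nth)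
qed

lemma path_edges_arc: "path_edges (arc b d) = {{cv (b+t), cv (b+t+1)} | t. t < d}"
  unfolding path_edges_def
proof (intro set_eqI iffI)
  fix e assume "e \<in> {{arc b d ! i, arc b d ! Suc i} |i. Suc i < length (arc b d)}"
  then show "e \<in> {{cv (b+t), cv (b+t+1)} | t. t < d}" by (auto simp: arc_nth)
next
  fix e assume "e \<in> {{cv (b+t), cv (b+t+1)} | t. t < d}"
  then obtain t where "t < d" "e = {cv (b+t), cv (b+t+1)}" by auto
  then show "e \<in> {{arc b d ! i, arc b d ! Suc i} |i. Suc i < length (arc b d)}"
    by (auto simp: arc_nth intro!: exI[of _ t])
qed

lemma path_edges_rev_sub: "path_edges P \<subseteq> path_edges (rev P)"
proof
  fix e assume "e \<in> path_edges P"
  then obtain i where i: "Suc i < length P" "e = {P ! i, P ! Suc i}" by (auto simp: path_edges_def)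
  define j where "j = length P - Suc (Suc i)"
  have "rev P ! j = P ! Suc i" using i unfolding j_def by (simp add: rev_nth Suc_diff_Suc)
  moreover have "rev P ! Suc j = P ! i" using i unfolding j_def by (simp add: rev_nth Suc_diff_Suc)
  moreover have "Suc j < length (rev P)" using i unfolding j_def by simp
  ultimately show "e \<in> path_edges (rev P)" using i unfolding path_edges_def by (auto intro!: exI[of _ j])
qed

lemma path_edges_rev: "path_edges (rev P) = path_edges P"
  using path_edges_rev_sub[of P] path_edges_rev_sub[of "rev P"] by simp

end



lemma Fbound:
  fixes s1 s2 m k n :: nat
  assumes "n = 2*k+1" "s1 < s2" "s2 < n"
    and "m \<ge> s2 - s1 \<or> m \<ge> n - (s2 - s1) \<or> (m = 1 \<and> n - (s2 - s1) = 2)"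
  shows "\<bar>\<bar>int s1 - int k\<bar> - \<bar>int s2 - int k\<bar>\<bar> \<le> int m"
  using assms by (auto simp: abs_if) 

context L begin

definition chord where "chord a \<longleftrightarrow> E (cv a) (cv (a+2))"

lemma in_arc: "z \<in> set (arc b d) \<Longrightarrow> \<exists>t\<le>d. z = cv (b+t)"
  by (auto simp: arc_set)

lemma cv_neq: "t1 \<le> n \<Longrightarrow> t2 \<le> n \<Longrightarrow> t1 \<noteq> t2 \<Longrightarrow> \<not>(t1=0\<and>t2=n) \<Longrightarrow> \<not>(t1=n\<and>t2=0) \<Longrightarrow> cv (a+t1) \<noteq> cv (a+t2)"
  using cv_win by blast

lemma two_chord_aux:
  assumes c1: "E (cv a) (cv (a+2))" and c2: "E (cv (a+q)) (cv (a+q+2))" and q: "2 \<le> q" "q + 3 \<le> n"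
  shows False
proof -
  define B where "B = arc (a+2) (q-2)"
  define P0 where "P0 = B @ [cv (a+(q+2))]"
  define P where "P = [cv a] @ P0"
  define A where "A = arc (a+(q+2)) (n-q-2)"
  have setB: "z \<in> set B \<Longrightarrow> \<exists>s. z = cv (a+s) \<and> 2 \<le> s \<and> s \<le> q" for z
  proof -
    assume "z \<in> set B"
    then obtain t where "t \<le> q-2" "z = cv (a+2+t)" using in_arc B_def by blast
    moreover have "a+2+t = a+(2+t)" by simp
    ultimately have "z = cv (a+(2+t))" "t \<le> q-2" by metis+
    then show ?thesis using q by (intro exI[of _ "2+t"]) auto
  qed
  have setP: "z \<in> set P \<Longrightarrow> \<exists>s. z = cv (a+s) \<and> (s = 0 \<or> (2 \<le> s \<and> s \<le> q) \<or> s = q+2)" for z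
  proof -
    assume "z \<in> set P"
    then have "z = cv (a+0) \<or> z \<in> set B \<or> z = cv (a+(q+2))" by (auto simp: P_def P0_def)
    then show ?thesis using setB by blast
  qed
  have setA: "z \<in> set A \<Longrightarrow> \<exists>s. z = cv (a+s) \<and> q+2 \<le> s \<and> s \<le> n" for z
  proof -
    assume "z \<in> set A"
    then obtain t where "t \<le> n-q-2" "z = cv (a+(q+2)+t)" using in_arc A_def by blast
    moreover have "a+(q+2)+t = a+(q+2+t)" by simp
    ultimately have "z = cv (a+(q+2+t))" "t \<le> n-q-2" by metis+
    then show ?thesis using q by (intro exI[of _ "q+2+t"]) auto
  qed
  have pB: "is_path E B" unfolding B_def using q by (intro arc_path) simp
  have lastB: "last B = cv (a+q)" unfolding B_def arc_last using q
    by (metis add.assoc le_add_diff_inverse)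
  have hdB: "hd B = cv (a+2)" unfolding B_def arc_hd by simp
  have d1: "set B \<inter> set [cv (a+(q+2))] = {}"
  proof -
    { fix z assume z: "z \<in> set B" "z = cv (a+(q+2))"
      then obtain s where s: "z = cv (a+s)" "2 \<le> s" "s \<le> q" using setB by blast
      have "cv (a+s) \<noteq> cv (a+(q+2))" using s q by (intro cv_neq) auto
      then have False using s z by simp }
    then show ?thesis by auto
  qed
  have pP0: "is_path E P0" unfolding P0_def
    by (rule is_path_append[OF pB _ _ d1]) (use c2 lastB in \<open>auto simp: is_path_def add.assoc\<close>)
  have Bne: "B \<noteq> []" using arc_len[of "a+2" "q-2"] unfolding B_def by (metis list.size(3) nat.distinct(1))
  have hdP0: "hd P0 = cv (a+2)" unfolding P0_def using hdB Bne by simp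
  have d2: "set [cv a] \<inter> set P0 = {}"
  proof -
    { fix z assume z: "z = cv (a+0)" "z \<in> set P0"
      then have "z \<in> set B \<or> z = cv (a+(q+2))" by (auto simp: P0_def)
      then obtain s where s: "z = cv (a+s)" "2 \<le> s" "s \<le> q+2" using setB by fastforce
      have "cv (a+0) \<noteq> cv (a+s)" using s q by (intro cv_neq) auto
      then have False using s z by simp }
    then show ?thesis by auto
  qed
  have pP: "is_path E P" unfolding P_def
    by (rule is_path_append[OF _ pP0 _ d2]) (use c1 hdP0 in \<open>auto simp: is_path_def\<close>)
  have pA: "is_path E A" unfolding A_def using q by (intro arc_path) simp
  have hP: "hd P = cv a" by (simp add: P_def)
  have lP: "last P = cv (a+(q+2))" by (simp add: P_def P0_def)
  have hA: "hd A = cv (a+(q+2))" by (simp add: A_def arc_hd)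
  have eqn: "a+(q+2)+(n-q-2) = a + n" using q by simp
  have "last A = cv (a+(q+2)+(n-q-2))" by (simp only: A_def arc_last)
  also have "\<dots> = cv (a + n)" using eqn by metis
  also have "\<dots> = cv a" by (rule cv_period)
  finally have lA: "last A = cv a" .
  have xy: "cv a \<noteq> cv (a+(q+2))" using cv_neq[of 0 "q+2" a] q by simp
  have int: "set P \<inter> set A = {cv a, cv (a+(q+2))}"
  proof
    show "{cv a, cv (a+(q+2))} \<subseteq> set P \<inter> set A"
      using hP lP hA lA pP pA by (auto simp: is_path_def dest: hd_in_set last_in_set)
    show "set P \<inter> set A \<subseteq> {cv a, cv (a+(q+2))}"
    proof
      fix z assume "z \<in> set P \<inter> set A"
      then obtain s1 s2 where s1: "z = cv (a+s1)" "s1 = 0 \<or> (2 \<le> s1 \<and> s1 \<le> q) \<or> s1 = q+2"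
        and s2: "z = cv (a+s2)" "q+2 \<le> s2" "s2 \<le> n" using setP setA by blast
      have "s1 \<le> n" using s1 q by auto
      then have "s1 = s2 \<or> (s1 = 0 \<and> s2 = n) \<or> (s1 = n \<and> s2 = 0)" using cv_win s1 s2 by metis
      then show "z \<in> {cv a, cv (a+(q+2))}" using s1 s2 q by auto
    qed
  qed
  have lenP: "length P = q + 1" using q by (simp add: P_def P0_def B_def)
  have lenA: "length A = n - q - 1" using q by (simp add: A_def)
  from glue[OF pP pA hP lP hA lA xy int] lenP lenA q
  have cy: "is_cycle E (butlast P @ butlast A)" "length (butlast P @ butlast A) = n - 2" by auto
  have "odd (n - 2)" using oddC ge7 by simp
  then have "n - 2 = 3" using odd_short[OF cy(1)] cy(2) ge7 by (simp only:) simp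
  then show False using ge7 by simp
qed

end



context L begin

lemma chord_period: "chord (a + n) = chord a"
proof -
  have "a + n + 2 = (a + 2) + n" by simp
  then show ?thesis unfolding chord_def using cv_period by metis
qed

lemma chord_far: assumes "chord a" "chord (a+q)" "2 \<le> q" "q + 2 \<le> n" shows False
proof (cases "q + 3 \<le> n")
  case True then show ?thesis using two_chord_aux assms unfolding chord_def by (metis add.assoc)
next
  case False
  then have qn: "a + q + 2 = a + n" using assms by simp
  have c1: "E (cv (a+q)) (cv (a+q+2))" using assms(2) unfolding chord_def by (simp add: add.assoc)
  have "cv (a+q+2) = cv a" using qn cv_period by metis
  moreover have "cv (a+q+2+2) = cv (a+2)"
  proof -
    have "a+q+2+2 = (a+2)+n" using qn by simp
    then show ?thesis using cv_period by metis
  qed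
  ultimately have c2: "E (cv (a+q+2)) (cv (a+q+2+2))" using assms(1) unfolding chord_def by simp
  show False using two_chord_aux[of "a+q" 2] c1 c2 ge7 by (simp add: add.assoc)
qed

lemma choose_r: "\<exists>r. \<forall>q. q + 2 < n \<longrightarrow> \<not> chord (r+q)"
proof (cases "\<exists>a. chord a")
  case False then show ?thesis by blast
next
  case True
  then obtain a0 where a0: "chord a0" by blast
  show ?thesis
  proof (cases "chord (a0 + n - 1)")
    case True
    have "\<not> chord (a0+1+q)" if q: "q + 2 < n" for q
    proof
      assume c: "chord (a0+1+q)"
      show False
      proof (cases q)
        case 0
        have "chord (a0 + n - 1 + 2)" using c 0 chord_period[of "a0+1"] npos
          by (metis add.commute add_Suc_right add_diff_cancel_left' One_nat_def Suc_1 Suc_diff_1 add.right_neutral add_Suc)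
        then show False using chord_far[OF True, of 2] ge7 by simp
      next
        case (Suc q')
        then show False using chord_far[OF a0, of "q+1"] c q by (simp add: add.assoc add.commute)
      qed
    qed
    then show ?thesis by (intro exI[of _ "a0+1"]) blast
  next
    case False
    have "\<not> chord (a0+2+q)" if q: "q + 2 < n" for q
    proof
      assume c: "chord (a0+2+q)"
      show False
      proof (cases "q + 3 = n")
        case True
        then have "a0 + 2 + q = a0 + n - 1" by simp
        then show False using c False by simp
      next
        case f: False
        then show False using chord_far[OF a0, of "q+2"] c q by (simp add: add.assoc add.commute)
      qed
    qed
    then show ?thesis by (intro exI[of _ "a0+2"]) blast
  qed
qed

lemma bridge:
  assumes pQ: "is_path E Q" and hQ: "hd Q = cv (r+s1)" and lQ: "last Q = cv (r+s2)"
    and s: "s1 < s2" "s2 < n"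
    and int: "\<forall>p. 0 < p \<and> p < length Q - 1 \<longrightarrow> Q ! p \<notin> set C"
  shows "length Q - 1 \<ge> s2 - s1 \<or> length Q - 1 \<ge> n - (s2 - s1) \<or> (length Q = 2 \<and> (s2 - s1 = 2 \<or> n - (s2-s1) = 2))"
proof (rule ccontr)
  assume neg: "\<not> ?thesis"
  define m where "m = length Q - 1"
  define d1 where "d1 = s2 - s1"
  define d2 where "d2 = n - d1"
  have xy: "cv (r+s1) \<noteq> cv (r+s2)" using cv_neq[of s1 s2 r] s by simp
  have Qne: "Q \<noteq> []" using pQ by (simp add: is_path_def)
  have lQ2: "2 \<le> length Q"
  proof (rule ccontr)
    assume "\<not> 2 \<le> length Q"
    moreover have "length Q \<noteq> 0" using Qne by simp
    ultimately have "length Q = 1" by linarith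
    then have "hd Q = last Q" using Qne by (cases Q) auto
    then show False using xy hQ lQ by simp
  qed
  have mlt: "m < d1" "m < d2" using neg unfolding m_def d1_def d2_def by auto
  have nm1: "\<not> (m = 1 \<and> (d1 = 2 \<or> d2 = 2))" using neg lQ2 unfolding m_def d1_def d2_def by auto
  have intA: "set Q \<inter> set A = {cv (r+s1), cv (r+s2)}"
    if A: "set A \<subseteq> set C" "A \<noteq> []" "hd A = cv (r+s2)" "last A = cv (r+s1)" for A
  proof
    show "{cv (r+s1), cv (r+s2)} \<subseteq> set Q \<inter> set A"
      using A hQ lQ Qne by (metis Int_iff empty_subsetI hd_in_set insert_subset last_in_set)
    show "set Q \<inter> set A \<subseteq> {cv (r+s1), cv (r+s2)}"
    proof
      fix z assume z: "z \<in> set Q \<inter> set A"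
      then obtain p where p: "p < length Q" "z = Q ! p" by (auto simp: in_set_conv_nth)
      consider "p = 0" | "p = length Q - 1" | "0 < p \<and> p < length Q - 1" using p by linarith
      then show "z \<in> {cv (r+s1), cv (r+s2)}"
      proof cases
        case 1 then show ?thesis using p hQ Qne by (simp add: hd_conv_nth)
      next
        case 2 then show ?thesis using p lQ Qne by (simp add: last_conv_nth)
      next
        case 3 then have "z \<notin> set C" using int p by simp
        then show ?thesis using z A by auto
      qed
    qed
  qed
  define A1 where "A1 = rev (arc (r+s1) d1)"
  define A2 where "A2 = arc (r+s2) d2"
  have d1n: "d1 < n" "0 < d1" using s d1_def by auto
  have pA1: "is_path E A1" unfolding A1_def using d1n by (intro is_path_rev[OF sym] arc_path)
  have pA2: "is_path E A2" unfolding A2_def using d1n d2_def by (intro arc_path) simp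
  have hA1: "hd A1 = cv (r+s2)" unfolding A1_def using s d1_def by (simp add: hd_rev arc_last add.assoc)
  have lA1: "last A1 = cv (r+s1)" unfolding A1_def by (simp add: last_rev arc_hd)
  have hA2: "hd A2 = cv (r+s2)" unfolding A2_def by (simp add: arc_hd)
  have "r + s2 + d2 = (r + s1) + n" using s d1_def d2_def by simp
  then have lA2: "last A2 = cv (r+s1)" unfolding A2_def arc_last using cv_period by metis
  have sA1: "set A1 \<subseteq> set C" "A1 \<noteq> []" unfolding A1_def using arc_subC by (auto simp: arc_def)
  have sA2: "set A2 \<subseteq> set C" "A2 \<noteq> []" unfolding A2_def using arc_subC by (auto simp: arc_def)
  have g1: "is_cycle E (butlast Q @ butlast A1) \<and> length (butlast Q @ butlast A1) = length Q + length A1 - 2"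
    using mlt lQ2 unfolding A1_def m_def
    by (intro glue[OF pQ pA1[unfolded A1_def] hQ lQ hA1[unfolded A1_def] lA1[unfolded A1_def] xy intA[OF sA1[unfolded A1_def] hA1[unfolded A1_def] lA1[unfolded A1_def]]]) simp
  have g2: "is_cycle E (butlast Q @ butlast A2) \<and> length (butlast Q @ butlast A2) = length Q + length A2 - 2"
    using mlt lQ2 unfolding A2_def m_def
    by (intro glue[OF pQ pA2[unfolded A2_def] hQ lQ hA2[unfolded A2_def] lA2[unfolded A2_def] xy intA[OF sA2[unfolded A2_def] hA2[unfolded A2_def] lA2[unfolded A2_def]]]) simp
  have L1: "length (butlast Q @ butlast A1) = m + d1" using g1 lQ2 unfolding m_def A1_def by simp
  have L2: "length (butlast Q @ butlast A2) = m + d2" using g2 lQ2 unfolding m_def A2_def by simp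
  have dsum: "d1 + d2 = n" using d1n d2_def by simp
  have m1: "1 \<le> m" using lQ2 m_def by simp
  show False
  proof (cases "odd (m + d1)")
    case True
    have o1: "odd (length (butlast Q @ butlast A1))" using True L1 by simp
    have o2: "length (butlast Q @ butlast A1) < n" using L1 mlt dsum by simp
    have "m + d1 = 3" using odd_short[OF conjunct1[OF g1] o1 o2] L1 by simp
    then show False using nm1 mlt m1 by simp
  next
    case False
    then have "odd (m + d2)" using oddC dsum by presburger
    then have o1: "odd (length (butlast Q @ butlast A2))" using L2 by simp
    have o2: "length (butlast Q @ butlast A2) < n" using L2 mlt dsum by simp
    have "m + d2 = 3" using odd_short[OF conjunct1[OF g2] o1 o2] L2 by simp
    then show False using nm1 mlt m1 by simp
  qed
qed

end



context L begin

definition F where "F s = \<bar>int s - int (n div 2)\<bar>"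

lemma decomp:
  assumes rch: "\<forall>q. q + 2 < n \<longrightarrow> \<not> chord (r+q)"
  shows "is_path E Q \<Longrightarrow> hd Q = cv (r+s1) \<Longrightarrow> last Q = cv (r+s2) \<Longrightarrow> s1 < n \<Longrightarrow> s2 < n
     \<Longrightarrow> \<bar>F s1 - F s2\<bar> \<le> int (length Q - 1)"
proof (induction "length Q" arbitrary: Q s1 s2 rule: less_induct)
  case less
  note pQ = less.prems(1) and hQ = less.prems(2) and lQ = less.prems(3) and s = less.prems(4,5)
  have Qne: "Q \<noteq> []" using pQ by (simp add: is_path_def)
  have nk: "n = 2 * (n div 2) + 1" using oddC by simp
  show ?case
  proof (cases "\<exists>p. 0 < p \<and> p < length Q - 1 \<and> Q ! p \<in> set C")
    case True
    then obtain p where p: "0 < p" "p < length Q - 1" "Q ! p \<in> set C" by blast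
    then obtain s3 where s3: "s3 < n" "Q ! p = cv (r+s3)" using set_C[of r] by blast
    define Q1 where "Q1 = take (Suc p) Q"
    define Q2 where "Q2 = drop p Q"
    have pQ1: "is_path E Q1" unfolding Q1_def by (rule is_path_take[OF pQ]) simp
    have pQ2: "is_path E Q2" unfolding Q2_def by (rule is_path_drop[OF pQ]) (use p in simp)
    have lenQ1: "length Q1 = Suc p" using p by (simp add: Q1_def)
    have lenQ2: "length Q2 = length Q - p" by (simp add: Q2_def)
    have hQ1: "hd Q1 = cv (r+s1)" using hQ Qne p unfolding Q1_def by (simp add: hd_conv_nth)
    have "last Q1 = Q1 ! p" using lenQ1 by (metis last_conv_nth diff_Suc_1 list.size(3) nat.distinct(1))
    also have "\<dots> = Q ! p" unfolding Q1_def by simp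
    finally have lQ1: "last Q1 = cv (r+s3)" using s3 by simp
    have hQ2: "hd Q2 = cv (r+s3)" using s3 p unfolding Q2_def by (simp add: hd_drop_conv_nth)
    have lQ2: "last Q2 = cv (r+s2)" using lQ p unfolding Q2_def by (simp add: last_drop)
    have IH1: "\<bar>F s1 - F s3\<bar> \<le> int (length Q1 - 1)"
      using less.hyps[of Q1 s1 s3] pQ1 hQ1 lQ1 s s3 lenQ1 p by simp
    have IH2: "\<bar>F s3 - F s2\<bar> \<le> int (length Q2 - 1)"
      using less.hyps[of Q2 s3 s2] pQ2 hQ2 lQ2 s s3 lenQ2 p by simp
    show ?thesis using IH1 IH2 lenQ1 lenQ2 p by simp
  next
    case False
    then have int: "\<forall>p. 0 < p \<and> p < length Q - 1 \<longrightarrow> Q ! p \<notin> set C" by blast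
    have edge2: "E (cv (r+s1)) (cv (r+s2))" if "length Q = 2"
    proof -
      have "E (Q ! 0) (Q ! Suc 0)" using pQ that by (simp add: is_path_def)
      moreover have "Q ! 0 = cv (r+s1)" using hQ Qne by (simp add: hd_conv_nth)
      moreover have "Q ! Suc 0 = cv (r+s2)" using lQ Qne that by (simp add: last_conv_nth)
      ultimately show ?thesis by simp
    qed
    consider "s1 = s2" | "s1 < s2" | "s2 < s1" by linarith
    then show ?thesis
    proof cases
      case 1 then show ?thesis by simp
    next
      case 2
      have B: "length Q - 1 \<ge> s2 - s1 \<or> length Q - 1 \<ge> n - (s2 - s1) \<or> (length Q = 2 \<and> (s2 - s1 = 2 \<or> n - (s2-s1) = 2))"
        by (rule bridge[OF pQ hQ lQ 2 s(2) int])
      have nc: "\<not> (length Q = 2 \<and> s2 - s1 = 2)"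
      proof
        assume a: "length Q = 2 \<and> s2 - s1 = 2"
        then have "r+s2 = r+s1+2" using 2 by linarith
        then have "E (cv (r+s1)) (cv (r+s1+2))" using edge2 a by metis
        then have "chord (r+s1)" by (simp add: chord_def)
        then show False using rch s a by force
      qed
      have "\<bar>\<bar>int s1 - int (n div 2)\<bar> - \<bar>int s2 - int (n div 2)\<bar>\<bar> \<le> int (length Q - 1)"
        by (rule Fbound[OF nk 2 s(2)]) (use B nc in auto)
      then show ?thesis by (simp add: F_def)
    next
      case 3
      have prQ: "is_path E (rev Q)" by (rule is_path_rev[OF sym pQ])
      have hrQ: "hd (rev Q) = cv (r+s2)" using lQ by (simp add: hd_rev)
      have lrQ: "last (rev Q) = cv (r+s1)" using hQ by (simp add: last_rev)
      have intr: "\<forall>p. 0 < p \<and> p < length (rev Q) - 1 \<longrightarrow> rev Q ! p \<notin> set C"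
      proof (intro allI impI)
        fix p assume pp: "0 < p \<and> p < length (rev Q) - 1"
        then have "p < length Q" by (simp only: length_rev) linarith
        then have "rev Q ! p = Q ! (length Q - Suc p)" by (rule rev_nth)
        moreover have "0 < length Q - Suc p \<and> length Q - Suc p < length Q - 1" using pp by auto
        ultimately show "rev Q ! p \<notin> set C" using int by simp
      qed
      have B: "length (rev Q) - 1 \<ge> s1 - s2 \<or> length (rev Q) - 1 \<ge> n - (s1 - s2) \<or> (length (rev Q) = 2 \<and> (s1 - s2 = 2 \<or> n - (s1-s2) = 2))"
        by (rule bridge[OF prQ hrQ lrQ 3 s(1) intr])
      have nc: "\<not> (length Q = 2 \<and> s1 - s2 = 2)"
      proof
        assume a: "length Q = 2 \<and> s1 - s2 = 2"
        then have "r+s1 = r+s2+2" using 3 by linarith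
        then have "E (cv (r+s2)) (cv (r+s2+2))" using edge2 sym a by metis
        then have "chord (r+s2)" by (simp add: chord_def)
        then show False using rch s a by force
      qed
      have "\<bar>\<bar>int s2 - int (n div 2)\<bar> - \<bar>int s1 - int (n div 2)\<bar>\<bar> \<le> int (length Q - 1)"
        by (rule Fbound[OF nk 3 s(1)]) (use B nc in auto)
      then show ?thesis by (simp add: F_def abs_minus_commute)
    qed
  qed
qed

end



theorem mainTheorem8:
  fixes V :: "'a set" and E :: "'a \<Rightarrow> 'a \<Rightarrow> bool" and C :: "'a list"
  assumes graph: "simple_graph V E"
    and fin: "finite V"
    and noC5: "\<not> (\<exists>D. is_cycle E D \<and> length D = 5)"
    and cyc: "is_cycle E C"
    and odd: "odd (length C)"
    and ge7: "7 \<le> length C"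
    and shortest: "\<forall>D. is_cycle E D \<and> odd (length D) \<and> 7 \<le> length D \<longrightarrow> length C \<le> length D"
  shows "\<exists>i P1 P2. i < length C \<and>
           shortest_path E P1 (C ! i) (C ! ((i + 1 + length C div 2) mod length C)) \<and>
           shortest_path E P2 (C ! ((i + 1) mod length C)) (C ! ((i + 1 + length C div 2) mod length C)) \<and>
           set C = set P1 \<union> set P2 \<and>
           cycle_edges C = {{C ! i, C ! ((i + 1) mod length C)}} \<union> path_edges P1 \<union> path_edges P2"
proof -
  have sym: "\<And>x y. E x y \<Longrightarrow> E y x" using graph by (simp add: simple_graph_def)
  interpret L E C using sym noC5 cyc odd ge7 shortest by unfold_locales auto
  obtain r where rch: "\<forall>q. q + 2 < n \<longrightarrow> \<not> chord (r+q)" using choose_r by blast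
  define k where "k = n div 2"
  have nk: "n = 2*k+1" using odd by (simp add: k_def)
  define i where "i = (r + n - 1) mod n"
  define P2 where "P2 = arc r k"
  define P1 where "P1 = rev (arc (r+k) k)"
  have il: "i < n" using npos by (simp add: i_def)
  have Ci: "C ! i = cv (r + 2*k)" unfolding i_def cv_def using nk by simp
  have i1: "(i + 1) mod n = r mod n"
  proof -
    have "(i + 1) mod n = (r + n - 1 + 1) mod n" unfolding i_def by (simp add: mod_Suc_eq)
    also have "r + n - 1 + 1 = r + n" using npos by simp
    finally show ?thesis by simp
  qed
  have Ci1: "C ! ((i + 1) mod n) = cv r" using i1 by (simp add: cv_def)
  have iw: "(i + 1 + n div 2) mod n = (r + k) mod n"
  proof -
    have "(i + 1 + n div 2) mod n = ((i + 1) mod n + k) mod n" by (simp add: k_def mod_add_left_eq)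
    also have "\<dots> = (r + k) mod n" using i1 by (simp add: mod_add_left_eq)
    finally show ?thesis .
  qed
  have Cw: "C ! ((i + 1 + n div 2) mod n) = cv (r+k)" using iw by (simp add: cv_def)
  have kn: "k < n" using nk by simp
  have Fk: "F 0 = int k" "F k = 0" "F (2*k) = int k" by (auto simp: F_def k_def[symmetric])
  have sp2: "shortest_path E P2 (cv r) (cv (r+k))"
    unfolding shortest_path_def
  proof (intro conjI allI impI)
    show "is_path E P2" unfolding P2_def using kn by (rule arc_path)
    show "hd P2 = cv r" by (simp add: P2_def arc_hd)
    show "last P2 = cv (r+k)" by (simp add: P2_def arc_last)
    fix Q assume Q: "is_path E Q \<and> hd Q = cv r \<and> last Q = cv (r + k)"
    have "\<bar>F 0 - F k\<bar> \<le> int (length Q - 1)"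
      using decomp[OF rch, of Q 0 k] Q kn npos by simp
    then have "k \<le> length Q - 1" using Fk by simp
    moreover have "length Q \<noteq> 0" using Q by (simp add: is_path_def)
    ultimately show "length P2 \<le> length Q" unfolding P2_def length_rev arc_len by linarith
  qed
  have sp1: "shortest_path E P1 (cv (r+2*k)) (cv (r+k))"
    unfolding shortest_path_def
  proof (intro conjI allI impI)
    show "is_path E P1" unfolding P1_def using kn by (intro is_path_rev[OF sym] arc_path)
    show "hd P1 = cv (r+2*k)" by (simp add: P1_def hd_rev arc_last mult_2 add.assoc)
    show "last P1 = cv (r+k)" by (simp add: P1_def last_rev arc_hd)
    fix Q assume Q: "is_path E Q \<and> hd Q = cv (r+2*k) \<and> last Q = cv (r + k)"
    have "\<bar>F (2*k) - F k\<bar> \<le> int (length Q - 1)"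
      using decomp[OF rch, of Q "2*k" k] Q kn nk by simp
    then have "k \<le> length Q - 1" using Fk by simp
    moreover have "length Q \<noteq> 0" using Q by (simp add: is_path_def)
    ultimately show "length P1 \<le> length Q" unfolding P1_def length_rev arc_len by linarith
  qed
  have setC: "set C = set P1 \<union> set P2"
  proof
    show "set P1 \<union> set P2 \<subseteq> set C" using arc_subC by (auto simp: P1_def P2_def)
    show "set C \<subseteq> set P1 \<union> set P2"
    proof
      fix x assume "x \<in> set C"
      then obtain t where t: "t < n" "x = cv (r+t)" using set_C[of r] by blast
      show "x \<in> set P1 \<union> set P2"
      proof (cases "t \<le> k")
        case True then show ?thesis using t by (auto simp: P2_def arc_set)
      next
        case False
        then have "t - k \<le> k" "r + k + (t - k) = r + t" using t nk by auto
        then show ?thesis using t by (auto simp: P1_def arc_set intro!: exI[of _ "t-k"])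
      qed
    qed
  qed
  have wrap: "cv (r + 2*k + 1) = cv r" using cv_period[of r] nk by (simp add: add.commute add.left_commute)
  have edges: "cycle_edges C = {{cv (r+2*k), cv r}} \<union> path_edges P1 \<union> path_edges P2"
  proof -
    have pe1: "path_edges P1 = {{cv (r+k+t), cv (r+k+t+1)} | t. t < k}"
      by (simp add: P1_def path_edges_rev path_edges_arc)
    have pe2: "path_edges P2 = {{cv (r+t), cv (r+t+1)} | t. t < k}"
      by (simp add: P2_def path_edges_arc)
    show ?thesis unfolding cycle_edges_cv[of r] pe1 pe2
    proof (intro set_eqI iffI)
      fix e assume "e \<in> {{cv (r+t), cv (r+t+1)} | t. t < n}"
      then obtain t where t: "t < n" "e = {cv (r+t), cv (r+t+1)}" by blast
      consider "t < k" | "k \<le> t \<and> t < 2*k" | "t = 2*k" using t nk by linarith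
      then show "e \<in> {{cv (r+2*k), cv r}} \<union> {{cv (r+k+t), cv (r+k+t+1)} | t. t < k} \<union> {{cv (r+t), cv (r+t+1)} | t. t < k}"
      proof cases
        case 1 then show ?thesis using t by blast
      next
        case 2
        then have "r + k + (t - k) = r + t" "t - k < k" by auto
        then show ?thesis using t by (auto intro!: exI[of _ "t-k"])
      next
        case 3 then show ?thesis using t wrap by simp
      qed
    next
      fix e assume e: "e \<in> {{cv (r+2*k), cv r}} \<union> {{cv (r+k+t), cv (r+k+t+1)} | t. t < k} \<union> {{cv (r+t), cv (r+t+1)} | t. t < k}"
      show "e \<in> {{cv (r+t), cv (r+t+1)} | t. t < n}"
      proof -
        { assume "e = {cv (r+2*k), cv r}"
          then have ?thesis using wrap nk by (auto intro!: exI[of _ "2*k"]) }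
        moreover
        { fix t assume "t < k" "e = {cv (r+k+t), cv (r+k+t+1)}"
          then have ?thesis using nk by (auto intro!: exI[of _ "k+t"] simp: add.assoc) }
        moreover
        { fix t assume "t < k" "e = {cv (r+t), cv (r+t+1)}"
          then have ?thesis using nk by (auto intro!: exI[of _ t]) }
        ultimately show ?thesis using e by blast
      qed
    qed
  qed
  show ?thesis
    apply (rule exI[of _ i], rule exI[of _ P1], rule exI[of _ P2])
    using il sp1 sp2 setC edges Ci Ci1 Cw by simp
qed



end
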